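(* Consider the system for scalar functions $p(z),q(z)$ \[ p'''= 3pp'+3q'+zp'+2p,\qquad q'''= 12pq'+6p'q+3p''+4zq'-2q. \] (i) This system admits the isomonodromic Lax representation ${\cal A}'={\cal B}_\zeta+[{\cal B},{\cal A}]$ (identically in the spectral parameter $\zeta$) with the $5\times5$ matrices \[ {\cal A}={\cal A}_0+\frac{1}{\zeta}{\cal A}_{-1},\qquad {\cal A}_{-1}= \begin{pmatrix} 0 & 0 & p+z & 0 & -1 \\ 0 & 0 & 0 & 0 & 0 \\ -p''+2p(p+z)+2q & 0 & p' & -2p & 0 \\ p'(p+z)-q' & 0 & 2q & -p' & 0 \\ p''(p+z)+p'+4pq-q'' & 0 & q' & 2q-p'' & 0 \end{pmatrix}, \] \[ {\cal A}_0= \begin{pmatrix} 0 & p+z-\zeta^2 & -\zeta & 0 & 0 \\ p+z-\zeta^2 & 0 & 0 & -1 & 0 \\ -2p\zeta & p' & 0 & 0 & 0 \\ -p'\zeta & 2q & 0 & 0 & 0 \\ (2q-p'')\zeta & q' & 0 & 0 & 0 \end{pmatrix},\qquad {\cal B}= \begin{pmatrix} 0 & \zeta & 1 & 0 & 0 \\ \zeta & 0 & 0 & 0 & 0 \\ 2p & 0 & 0 & 1 & 0 \\ p' & 0 & 0 & 0 & 1 \\ p''-2q & 0 & 1 & 3p+z & 0 \end{pmatrix}. \] (ii) The following quantities are first integrals of the system: \[ H_1=q''-6pq+2zq-2(p+z)p''+(p')^2-p'+2p(p+z)^2, \] \[ H_2= 2q(p''-2q)^2-2q'(p'p''-2p'q-pq')+((p')^2-4pq)(q''-p'-6pq-2zq).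 \]
   Context: Primes denote derivatives with respect to $z$; $\zeta$ is a spectral parameter independent of $z$. "Admits the Lax representation" means that the matrix equation ${\cal A}'={\cal B}_\zeta+[{\cal B},{\cal A}]$ holds by virtue of the system. *)

theory Defs
  imports "HOL-Analysis.Analysis" "HOL-Library.Numeral_Type"
begin

text \<open>5x5 real matrices built row by row; the arguments are the values
  p, p', p'', q, q', q'' at the point z, the point z itself and the spectral
  parameter zeta.\<close>

definition mat5 :: "real list list \<Rightarrow> real^5^5" where
  "mat5 rs = vector (map vector rs)"

definition laxAm1 :: "real \<Rightarrow> real \<Rightarrow> real \<Rightarrow> real \<Rightarrow> real \<Rightarrow> real \<Rightarrow> real \<Rightarrow> real^5^5" where
  "laxAm1 p p1 p2 q q1 q2 z = mat5
    [[0, 0, p + z, 0, -1],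
     [0, 0, 0, 0, 0],
     [-p2 + 2*p*(p+z) + 2*q, 0, p1, -2*p, 0],
     [p1*(p+z) - q1, 0, 2*q, -p1, 0],
     [p2*(p+z) + p1 + 4*p*q - q2, 0, q1, 2*q - p2, 0]]"

definition laxA0 :: "real \<Rightarrow> real \<Rightarrow> real \<Rightarrow> real \<Rightarrow> real \<Rightarrow> real \<Rightarrow> real \<Rightarrow> real \<Rightarrow> real^5^5" where
  "laxA0 p p1 p2 q q1 q2 z \<zeta> = mat5
    [[0, p + z - \<zeta>^2, -\<zeta>, 0, 0],
     [p + z - \<zeta>^2, 0, 0, -1, 0],
     [-2*p*\<zeta>, p1, 0, 0, 0],
     [-p1*\<zeta>, 2*q, 0, 0, 0],
     [(2*q - p2)*\<zeta>, q1, 0, 0, 0]]"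

definition laxA :: "real \<Rightarrow> real \<Rightarrow> real \<Rightarrow> real \<Rightarrow> real \<Rightarrow> real \<Rightarrow> real \<Rightarrow> real \<Rightarrow> real^5^5" where
  "laxA p p1 p2 q q1 q2 z \<zeta> =
     laxA0 p p1 p2 q q1 q2 z \<zeta> + (1 / \<zeta>) *\<^sub>R laxAm1 p p1 p2 q q1 q2 z"

definition laxB :: "real \<Rightarrow> real \<Rightarrow> real \<Rightarrow> real \<Rightarrow> real \<Rightarrow> real \<Rightarrow> real \<Rightarrow> real \<Rightarrow> real^5^5" where
  "laxB p p1 p2 q q1 q2 z \<zeta> = mat5
    [[0, \<zeta>, 1, 0, 0],
     [\<zeta>, 0, 0, 0, 0],
     [2*p, 0, 0, 1, 0],
     [p1, 0, 0, 0, 1],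
     [p2 - 2*q, 0, 1, 3*p + z, 0]]"

definition H1 :: "real \<Rightarrow> real \<Rightarrow> real \<Rightarrow> real \<Rightarrow> real \<Rightarrow> real \<Rightarrow> real \<Rightarrow> real" where
  "H1 p p1 p2 q q1 q2 z =
     q2 - 6*p*q + 2*z*q - 2*(p+z)*p2 + p1^2 - p1 + 2*p*(p+z)^2"

definition H2 :: "real \<Rightarrow> real \<Rightarrow> real \<Rightarrow> real \<Rightarrow> real \<Rightarrow> real \<Rightarrow> real \<Rightarrow> real" where
  "H2 p p1 p2 q q1 q2 z =
     2*q*(p2 - 2*q)^2 - 2*q1*(p1*p2 - 2*p1*q - p*q1)
     + (p1^2 - 4*p*q)*(q2 - p1 - 6*p*q - 2*z*q)"

end

theory Submission imports Defs begin
lemma mat_expand: "(x::real^'n^'m) = (\<Sum>i\<in>UNIV. \<Sum>j\<in>UNIV. (x$i$j) *\<^sub>R axis i (axis j 1))"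
proof -
  have "\<And>a b. (\<Sum>i\<in>UNIV. \<Sum>j\<in>UNIV. (x$i$j) *\<^sub>R axis i (axis j (1::real))) $ a $ b = x $ a $ b"
  proof -
    fix a b
    have "(\<Sum>i\<in>UNIV. \<Sum>j\<in>UNIV. (x$i$j) *\<^sub>R axis i (axis j (1::real))) $ a $ b
       = (\<Sum>i\<in>UNIV. if a = i then (\<Sum>j\<in>UNIV. if b = j then x$i$j else 0) else 0)"
      unfolding sum_component by (intro sum.cong refl) (auto simp: axis_def if_distrib[of "\<lambda>t. _ * t"] cong: if_cong)
    also have "\<dots> = x $ a $ b" by simp
    finally show "?thesis a b" .
  qed
  then show ?thesis by (simp add: vec_eq_iff)
qed
lemma mat_deriv:
  fixes f :: "real \<Rightarrow> real^'n^'m"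
  assumes "\<And>i j. ((\<lambda>w. f w $ i $ j) has_real_derivative D $ i $ j) (at z)"
  shows "(f has_vector_derivative D) (at z)"
proof -
  have "((\<lambda>w. \<Sum>i\<in>UNIV. \<Sum>j\<in>UNIV. (f w$i$j) *\<^sub>R axis i (axis j (1::real))) has_vector_derivative
     (\<Sum>i\<in>UNIV. \<Sum>j\<in>UNIV. (D$i$j) *\<^sub>R axis i (axis j 1))) (at z)"
    by (intro has_vector_derivative_sum has_vector_derivative_scaleR[OF assms has_vector_derivative_const, simplified])
  then show ?thesis by (simp flip: mat_expand)
qed

lemma exhaust_5: fixes x :: 5 shows "x = 1 \<or> x = 2 \<or> x = 3 \<or> x = 4 \<or> x = 5"
proof (induct x)
  case (of_int z)
  then have "z = 0 \<or> z = 1 \<or> z = 2 \<or> z = 3 \<or> z = 4" by fastforce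
  then show ?case by auto
qed
lemma UNIV_5: "(UNIV::5 set) = {1,2,3,4,5}" using exhaust_5 by auto
lemma sum_5: "sum f (UNIV::5 set) = f 1 + f 2 + f 3 + f 4 + f 5"
  unfolding UNIV_5 by (simp add: ac_simps)
lemma vector_5 [simp]:
 "(vector [a,b,c,d,e] ::('a::zero)^5)$1 = a"
 "(vector [a,b,c,d,e] ::('a::zero)^5)$2 = b"
 "(vector [a,b,c,d,e] ::('a::zero)^5)$3 = c"
 "(vector [a,b,c,d,e] ::('a::zero)^5)$4 = d"
 "(vector [a,b,c,d,e] ::('a::zero)^5)$5 = e"
  unfolding vector_def by simp_all

lemma laxB_deriv:
  "((\<lambda>\<xi>. laxB a b c d e f g \<xi>) has_vector_derivative
     mat5 [[0,1,0,0,0],[1,0,0,0,0],[0,0,0,0,0],[0,0,0,0,0],[0,0,0,0,0]]) (at \<zeta>)"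
  apply (rule mat_deriv)
  subgoal for i j
    using exhaust_5[of i] exhaust_5[of j]
    by (elim disjE) (auto simp: laxB_def mat5_def intro!: derivative_eq_intros)
  done
theorem proposition4:
  fixes p p1 p2 p3 q q1 q2 q3 :: "real \<Rightarrow> real"
  assumes dp:  "\<And>z. (p  has_real_derivative p1 z) (at z)"
      and dp1: "\<And>z. (p1 has_real_derivative p2 z) (at z)"
      and dp2: "\<And>z. (p2 has_real_derivative p3 z) (at z)"
      and dq:  "\<And>z. (q  has_real_derivative q1 z) (at z)"
      and dq1: "\<And>z. (q1 has_real_derivative q2 z) (at z)"
      and dq2: "\<And>z. (q2 has_real_derivative q3 z) (at z)"
      and eqp: "\<And>z. p3 z = 3 * p z * p1 z + 3 * q1 z + z * p1 z + 2 * p z"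
      and eqq: "\<And>z. q3 z = 12 * p z * q1 z + 6 * p1 z * q z + 3 * p2 z + 4 * z * q1 z - 2 * q z"
  shows "(\<forall>z \<zeta>. \<zeta> \<noteq> 0 \<longrightarrow>
            ((\<lambda>w. laxA (p w) (p1 w) (p2 w) (q w) (q1 w) (q2 w) w \<zeta>) has_vector_derivative
               (vector_derivative (\<lambda>\<xi>. laxB (p z) (p1 z) (p2 z) (q z) (q1 z) (q2 z) z \<xi>) (at \<zeta>)
                + laxB (p z) (p1 z) (p2 z) (q z) (q1 z) (q2 z) z \<zeta> ** laxA (p z) (p1 z) (p2 z) (q z) (q1 z) (q2 z) z \<zeta>
                - laxA (p z) (p1 z) (p2 z) (q z) (q1 z) (q2 z) z \<zeta> ** laxB (p z) (p1 z) (p2 z) (q z) (q1 z) (q2 z) z \<zeta>))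
            (at z))
       \<and> (\<forall>z. ((\<lambda>w. H1 (p w) (p1 w) (p2 w) (q w) (q1 w) (q2 w) w) has_real_derivative 0) (at z))
       \<and> (\<forall>z. ((\<lambda>w. H2 (p w) (p1 w) (p2 w) (q w) (q1 w) (q2 w) w) has_real_derivative 0) (at z))"
proof -
  have dp': "\<And>z D. D = p1 z \<Longrightarrow> (p has_real_derivative D) (at z)" using dp by simp
  have dp1': "\<And>z D. D = p2 z \<Longrightarrow> (p1 has_real_derivative D) (at z)" using dp1 by simp
  have dp2': "\<And>z D. D = p3 z \<Longrightarrow> (p2 has_real_derivative D) (at z)" using dp2 by simp
  have dq': "\<And>z D. D = q1 z \<Longrightarrow> (q has_real_derivative D) (at z)" using dq by simp
  have dq1': "\<And>z D. D = q2 z \<Longrightarrow> (q1 has_real_derivative D) (at z)" using dq1 by simp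
  have dq2': "\<And>z D. D = q3 z \<Longrightarrow> (q2 has_real_derivative D) (at z)" using dq2 by simp
  show ?thesis
proof (intro conjI allI impI)
  fix z \<zeta> :: real
  assume z0: "\<zeta> \<noteq> 0"
  have vd: "vector_derivative (\<lambda>\<xi>. laxB (p z) (p1 z) (p2 z) (q z) (q1 z) (q2 z) z \<xi>) (at \<zeta>)
     = mat5 [[0,1,0,0,0],[1,0,0,0,0],[0,0,0,0,0],[0,0,0,0,0],[0,0,0,0,0]]"
    by (rule vector_derivative_at[OF laxB_deriv])
  show "((\<lambda>w. laxA (p w) (p1 w) (p2 w) (q w) (q1 w) (q2 w) w \<zeta>) has_vector_derivative
               (vector_derivative (\<lambda>\<xi>. laxB (p z) (p1 z) (p2 z) (q z) (q1 z) (q2 z) z \<xi>) (at \<zeta>)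
                + laxB (p z) (p1 z) (p2 z) (q z) (q1 z) (q2 z) z \<zeta> ** laxA (p z) (p1 z) (p2 z) (q z) (q1 z) (q2 z) z \<zeta>
                - laxA (p z) (p1 z) (p2 z) (q z) (q1 z) (q2 z) z \<zeta> ** laxB (p z) (p1 z) (p2 z) (q z) (q1 z) (q2 z) z \<zeta>))
            (at z)"
    unfolding vd
    apply (rule mat_deriv)
    subgoal for i j
      using exhaust_5[of i] exhaust_5[of j]
      apply (elim disjE)
      apply (simp_all add: laxA_def laxA0_def laxAm1_def laxB_def mat5_def matrix_matrix_mult_def sum_5 power2_eq_square)
      apply (auto intro!: derivative_eq_intros dp' dp1' dp2' dq' dq1' dq2' simp: eqp eqq field_simps z0)
      done
    done
next
  fix z
  show "((\<lambda>w. H1 (p w) (p1 w) (p2 w) (q w) (q1 w) (q2 w) w) has_real_derivative 0) (at z)"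
    unfolding H1_def
    apply (auto intro!: derivative_eq_intros dp' dp1' dp2' dq' dq1' dq2' simp: eqp eqq)
    by (simp add: algebra_simps power2_eq_square)
next
  fix z
  show "((\<lambda>w. H2 (p w) (p1 w) (p2 w) (q w) (q1 w) (q2 w) w) has_real_derivative 0) (at z)"
    unfolding H2_def
    apply (auto intro!: derivative_eq_intros dp' dp1' dp2' dq' dq1' dq2' simp: eqp eqq)
    by (simp add: algebra_simps power2_eq_square)
qed
qed

end
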